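(* For $n>2$, let $Q=G_{n+1}^2/N$ where $N$ is the normal subgroup generated by all elements $a_{i(n+1)}a_{j(n+1)}a_{i(n+1)}^{-1}a_{j(n+1)}^{-1}$, $i,j\in\{1,\dots,n\}$. Then the assignment $\kappa(a_{ij})=a_{ij}$ for $\{i,j\}\subset\{1,\dots,n\}$ and $\kappa(\tau_i)=a_{i(n+1)}$ extends to a well-defined group homomorphism $\kappa\colon G_{n,\mathcal{D}}^2\to Q$.
   Context: $G_{N}^2$ is the group with generators $a_{ij}=a_{\{i,j\}}$ for $2$-element subsets $\{i,j\}\subset\{1,\dots,N\}$ and relations $a_{ij}^2=1$; $a_{ij}a_{kl}=a_{kl}a_{ij}$ for distinct $i,j,k,l$; $a_{ij}a_{ik}a_{jk}=a_{jk}a_{ik}a_{ij}$ for distinct $i,j,k$. $G_{n,\mathcal{D}}^2$ has generators $a_{ij}$ ($\{i,j\}\subset\{1,\dots,n\}$) and $\tau_i$ ($1\le i\le n$) with relations: $a_{ij}^2=1$; $a_{ij}a_{kl}=a_{kl}a_{ij}$ for distinct $i,j,k,l$; $a_{ij}a_{ik}a_{jk}=a_{jk}a_{ik}a_{ij}$ for distinct $i,j,k$; $\tau_i^2=1$; $\tau_i\tau_j=\tau_j\tau_i$; $\tau_i\tau_ja_{ij}\tau_j\tau_i=a_{ij}$; $a_{ij}\tau_k=\tau_ka_{ij}$ for distinct $i,j,k$. *)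

theory Defs
  imports "HOL-Algebra.Algebra"
begin

text \<open>A word is a list of letters (x, b); b = True means the inverse letter x^-1.\<close>
type_synonym 'a word = "('a \<times> bool) list"

definition words :: "'a set \<Rightarrow> 'a word set" where
  "words S = lists (S \<times> UNIV)"

definition inv_word :: "'a word \<Rightarrow> 'a word" where
  "inv_word w = rev (map (\<lambda>(x, b). (x, \<not> b)) w)"

definition lt :: "'a \<Rightarrow> 'a word" where
  "lt x = [(x, False)]"

inductive_set pres_rel :: "'a set \<Rightarrow> 'a word set \<Rightarrow> ('a word \<times> 'a word) set"
  for S R where
  refl: "w \<in> words S \<Longrightarrow> (w, w) \<in> pres_rel S R"
| sym: "(u, v) \<in> pres_rel S R \<Longrightarrow> (v, u) \<in> pres_rel S R"
| trans: "(u, v) \<in> pres_rel S R \<Longrightarrow> (v, w) \<in> pres_rel S R \<Longrightarrow> (u, w) \<in> pres_rel S R"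
| cancel: "u \<in> words S \<Longrightarrow> v \<in> words S \<Longrightarrow> x \<in> S \<Longrightarrow>
           (u @ [(x, b), (x, \<not> b)] @ v, u @ v) \<in> pres_rel S R"
| relator: "u \<in> words S \<Longrightarrow> v \<in> words S \<Longrightarrow> r \<in> R \<Longrightarrow> r \<in> words S \<Longrightarrow>
           (u @ r @ v, u @ v) \<in> pres_rel S R"

definition presented_group :: "'a set \<Rightarrow> 'a word set \<Rightarrow> 'a word set monoid" where
  "presented_group S R =
     \<lparr> carrier = words S // pres_rel S R,
       monoid.mult = (\<lambda>A B. \<Union>a\<in>A. \<Union>b\<in>B. pres_rel S R `` {a @ b}),
       monoid.one = pres_rel S R `` {[]} \<rparr>"

definition pgen :: "'a set \<Rightarrow> 'a word set \<Rightarrow> 'a \<Rightarrow> 'a word set" where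
  "pgen S R x = pres_rel S R `` {lt x}"

definition normal_closure :: "('a, 'b) monoid_scheme \<Rightarrow> 'a set \<Rightarrow> 'a set" where
  "normal_closure G H =
     generate G {g \<otimes>\<^bsub>G\<^esub> h \<otimes>\<^bsub>G\<^esub> inv\<^bsub>G\<^esub> g | g h. g \<in> carrier G \<and> h \<in> H}"

text \<open>Generators a_ij = a_{i,j} are indexed by 2-element subsets {i,j} of {1..N}.\<close>
definition G2_gens :: "nat \<Rightarrow> nat set set" where
  "G2_gens N = {{i, j} | i j. i \<in> {1..N} \<and> j \<in> {1..N} \<and> i \<noteq> j}"

definition G2_rels :: "nat \<Rightarrow> nat set word set" where
  "G2_rels N =
     {lt {i,j} @ lt {i,j} | i j. i \<in> {1..N} \<and> j \<in> {1..N} \<and> i \<noteq> j}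
   \<union> {lt {i,j} @ lt {k,l} @ inv_word (lt {k,l} @ lt {i,j}) | i j k l.
        i \<in> {1..N} \<and> j \<in> {1..N} \<and> k \<in> {1..N} \<and> l \<in> {1..N} \<and> distinct [i, j, k, l]}
   \<union> {lt {i,j} @ lt {i,k} @ lt {j,k} @ inv_word (lt {j,k} @ lt {i,k} @ lt {i,j}) | i j k.
        i \<in> {1..N} \<and> j \<in> {1..N} \<and> k \<in> {1..N} \<and> distinct [i, j, k]}"

definition G2 :: "nat \<Rightarrow> nat set word set monoid" where
  "G2 N = presented_group (G2_gens N) (G2_rels N)"

definition a2 :: "nat \<Rightarrow> nat \<Rightarrow> nat \<Rightarrow> nat set word set" where
  "a2 N i j = pgen (G2_gens N) (G2_rels N) {i, j}"

datatype gD = A "nat set" | Tau nat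

definition GD_gens :: "nat \<Rightarrow> gD set" where
  "GD_gens n = {A {i, j} | i j. i \<in> {1..n} \<and> j \<in> {1..n} \<and> i \<noteq> j} \<union> {Tau i | i. i \<in> {1..n}}"

definition GD_rels :: "nat \<Rightarrow> gD word set" where
  "GD_rels n =
     {lt (A {i,j}) @ lt (A {i,j}) | i j. i \<in> {1..n} \<and> j \<in> {1..n} \<and> i \<noteq> j}
   \<union> {lt (A {i,j}) @ lt (A {k,l}) @ inv_word (lt (A {k,l}) @ lt (A {i,j})) | i j k l.
        i \<in> {1..n} \<and> j \<in> {1..n} \<and> k \<in> {1..n} \<and> l \<in> {1..n} \<and> distinct [i, j, k, l]}
   \<union> {lt (A {i,j}) @ lt (A {i,k}) @ lt (A {j,k}) @
        inv_word (lt (A {j,k}) @ lt (A {i,k}) @ lt (A {i,j})) | i j k.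
        i \<in> {1..n} \<and> j \<in> {1..n} \<and> k \<in> {1..n} \<and> distinct [i, j, k]}
   \<union> {lt (Tau i) @ lt (Tau i) | i. i \<in> {1..n}}
   \<union> {lt (Tau i) @ lt (Tau j) @ inv_word (lt (Tau j) @ lt (Tau i)) | i j.
        i \<in> {1..n} \<and> j \<in> {1..n}}
   \<union> {lt (Tau i) @ lt (Tau j) @ lt (A {i,j}) @ lt (Tau j) @ lt (Tau i) @ inv_word (lt (A {i,j})) | i j.
        i \<in> {1..n} \<and> j \<in> {1..n} \<and> i \<noteq> j}
   \<union> {lt (A {i,j}) @ lt (Tau k) @ inv_word (lt (Tau k) @ lt (A {i,j})) | i j k.
        i \<in> {1..n} \<and> j \<in> {1..n} \<and> k \<in> {1..n} \<and> distinct [i, j, k]}"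

definition GD :: "nat \<Rightarrow> gD word set monoid" where
  "GD n = presented_group (GD_gens n) (GD_rels n)"

definition aD :: "nat \<Rightarrow> nat \<Rightarrow> nat \<Rightarrow> gD word set" where
  "aD n i j = pgen (GD_gens n) (GD_rels n) (A {i, j})"

definition tauD :: "nat \<Rightarrow> nat \<Rightarrow> gD word set" where
  "tauD n i = pgen (GD_gens n) (GD_rels n) (Tau i)"

definition NQ :: "nat \<Rightarrow> nat set word set set" where
  "NQ n = normal_closure (G2 (Suc n))
     {a2 (Suc n) i (Suc n) \<otimes>\<^bsub>G2 (Suc n)\<^esub> a2 (Suc n) j (Suc n)
        \<otimes>\<^bsub>G2 (Suc n)\<^esub> inv\<^bsub>G2 (Suc n)\<^esub> (a2 (Suc n) i (Suc n))
        \<otimes>\<^bsub>G2 (Suc n)\<^esub> inv\<^bsub>G2 (Suc n)\<^esub> (a2 (Suc n) j (Suc n)) | i j. i \<in> {1..n} \<and> j \<in> {1..n}}"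

definition Q :: "nat \<Rightarrow> nat set word set set monoid" where
  "Q n = G2 (Suc n) Mod NQ n"

end

theory Submission
  imports Defs
begin


lemma words_append[simp]: "u @ v \<in> words S \<longleftrightarrow> u \<in> words S \<and> v \<in> words S"
  by (auto simp: words_def)
lemma words_Cons[simp]: "(x,b) # v \<in> words S \<longleftrightarrow> x \<in> S \<and> v \<in> words S"
  by (auto simp: words_def)
lemma words_Nil[simp]: "[] \<in> words S"
  by (auto simp: words_def)
lemma inv_word_Nil[simp]: "inv_word [] = []" by (simp add: inv_word_def)
lemma inv_word_Cons[simp]: "inv_word ((x,b)#w) = inv_word w @ [(x, \<not> b)]"
  by (simp add: inv_word_def)
lemma inv_word_append[simp]: "inv_word (u @ v) = inv_word v @ inv_word u"
  by (simp add: inv_word_def)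
lemma inv_word_words[simp]: "inv_word w \<in> words S \<longleftrightarrow> w \<in> words S"
  by (induction w) auto
lemma lt_words[simp]: "lt x \<in> words S \<longleftrightarrow> x \<in> S" by (simp add: lt_def)
lemma inv_word_lt[simp]: "inv_word (lt x) = [(x, True)]" by (simp add: lt_def)

lemma pres_rel_words: "(u,v) \<in> pres_rel S R \<Longrightarrow> u \<in> words S \<and> v \<in> words S"
  by (induction rule: pres_rel.induct) auto

lemma pres_rel_equiv: "equiv (words S) (pres_rel S R)"
  unfolding equiv_def refl_on_def sym_def trans_def
  using pres_rel_words pres_rel.refl pres_rel.sym pres_rel.trans by (metis subrelI SigmaI)

lemma pres_rel_cong1:
  assumes "(u,v) \<in> pres_rel S R" "a \<in> words S" "b \<in> words S"
  shows "(a @ u @ b, a @ v @ b) \<in> pres_rel S R"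
  using assms
proof (induction rule: pres_rel.induct)
  case (refl w) then show ?case by (auto intro: pres_rel.refl)
next
  case (sym u v) then show ?case by (auto intro: pres_rel.sym)
next
  case (trans u v w) then show ?case by (meson pres_rel.trans)
next
  case (cancel u v x c)
  then show ?case using pres_rel.cancel[of "a @ u" S "v @ b" x c R] by simp
next
  case (relator u v r)
  then show ?case using pres_rel.relator[of "a @ u" S "v @ b" r R] by simp
qed

lemma pres_rel_cong:
  assumes "(u,u') \<in> pres_rel S R" "(v,v') \<in> pres_rel S R"
  shows "(u @ v, u' @ v') \<in> pres_rel S R"
proof -
  have w: "u \<in> words S" "u' \<in> words S" "v \<in> words S" "v' \<in> words S"
    using assms pres_rel_words by blast+
  have "(u @ v, u' @ v) \<in> pres_rel S R"
    using pres_rel_cong1[OF assms(1), of "[]" v] w by simp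
  moreover have "(u' @ v, u' @ v') \<in> pres_rel S R"
    using pres_rel_cong1[OF assms(2), of u' "[]"] w by simp
  ultimately show ?thesis by (rule pres_rel.trans)
qed

lemma mult_class:
  assumes "u \<in> words S" "v \<in> words S"
  shows "monoid.mult (presented_group S R) (pres_rel S R `` {u}) (pres_rel S R `` {v})
         = pres_rel S R `` {u @ v}"
proof -
  have "(\<Union>a\<in>pres_rel S R `` {u}. \<Union>b\<in>pres_rel S R `` {v}. pres_rel S R `` {a @ b})
        = pres_rel S R `` {u @ v}"
  proof (intro equalityI subsetI)
    fix x assume "x \<in> (\<Union>a\<in>pres_rel S R `` {u}. \<Union>b\<in>pres_rel S R `` {v}. pres_rel S R `` {a @ b})"
    then obtain a b where "(u,a) \<in> pres_rel S R" "(v,b) \<in> pres_rel S R" "(a@b, x) \<in> pres_rel S R"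
      by auto
    then show "x \<in> pres_rel S R `` {u @ v}"
      using pres_rel_cong pres_rel.trans by blast
  next
    fix x assume "x \<in> pres_rel S R `` {u @ v}"
    moreover have "u \<in> pres_rel S R `` {u}" "v \<in> pres_rel S R `` {v}"
      using assms pres_rel.refl by auto
    ultimately show "x \<in> (\<Union>a\<in>pres_rel S R `` {u}. \<Union>b\<in>pres_rel S R `` {v}. pres_rel S R `` {a @ b})"
      by blast
  qed
  then show ?thesis by (simp add: presented_group_def)
qed

lemma inv_word_cancel: "w \<in> words S \<Longrightarrow> (inv_word w @ w, []) \<in> pres_rel S R"
proof (induction w)
  case Nil then show ?case by (auto intro: pres_rel.refl)
next
  case (Cons c w)
  obtain x b where c: "c = (x,b)" by fastforce
  have "(inv_word w @ [(x, \<not> b), (x, \<not> \<not> b)] @ w, inv_word w @ w) \<in> pres_rel S R"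
    using Cons c by (intro pres_rel.cancel) auto
  then have "(inv_word (c # w) @ c # w, inv_word w @ w) \<in> pres_rel S R"
    using c by simp
  moreover have "(inv_word w @ w, []) \<in> pres_rel S R" using Cons c by auto
  ultimately show ?case using pres_rel.trans by blast
qed

lemma carrier_pg: "carrier (presented_group S R) = words S // pres_rel S R"
  by (simp add: presented_group_def)
lemma one_pg: "one (presented_group S R) = pres_rel S R `` {[]}"
  by (simp add: presented_group_def)

lemma class_in_carrier: "w \<in> words S \<Longrightarrow> pres_rel S R `` {w} \<in> carrier (presented_group S R)"
  by (simp add: carrier_pg quotientI)

lemma presented_group_is_group: "group (presented_group S R)"
proof (rule groupI)
  let ?P = "presented_group S R"
  show "\<one>\<^bsub>?P\<^esub> \<in> carrier ?P" by (simp add: one_pg class_in_carrier)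
next
  fix x y assume "x \<in> carrier (presented_group S R)" "y \<in> carrier (presented_group S R)"
  then obtain u v where "u \<in> words S" "v \<in> words S" "x = pres_rel S R `` {u}" "y = pres_rel S R `` {v}"
    by (auto simp: carrier_pg elim!: quotientE)
  then show "x \<otimes>\<^bsub>presented_group S R\<^esub> y \<in> carrier (presented_group S R)"
    by (simp add: mult_class class_in_carrier)
next
  fix x y z assume "x \<in> carrier (presented_group S R)" "y \<in> carrier (presented_group S R)"
     "z \<in> carrier (presented_group S R)"
  then obtain u v w where "u \<in> words S" "v \<in> words S" "w \<in> words S" "x = pres_rel S R `` {u}"
     "y = pres_rel S R `` {v}" "z = pres_rel S R `` {w}"
    by (auto simp: carrier_pg elim!: quotientE)
  then show "x \<otimes>\<^bsub>presented_group S R\<^esub> y \<otimes>\<^bsub>presented_group S R\<^esub> z =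
             x \<otimes>\<^bsub>presented_group S R\<^esub> (y \<otimes>\<^bsub>presented_group S R\<^esub> z)"
    by (simp add: mult_class)
next
  fix x assume "x \<in> carrier (presented_group S R)"
  then obtain u where "u \<in> words S" "x = pres_rel S R `` {u}"
    by (auto simp: carrier_pg elim!: quotientE)
  then show "\<one>\<^bsub>presented_group S R\<^esub> \<otimes>\<^bsub>presented_group S R\<^esub> x = x"
    using mult_class[of "[]" S u R] by (simp add: one_pg)
next
  fix x assume "x \<in> carrier (presented_group S R)"
  then obtain u where u: "u \<in> words S" "x = pres_rel S R `` {u}"
    by (auto simp: carrier_pg elim!: quotientE)
  have "pres_rel S R `` {inv_word u @ u} = pres_rel S R `` {[]}"
    using inv_word_cancel[OF u(1)] pres_rel_equiv equiv_class_eq by metis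
  then show "\<exists>y\<in>carrier (presented_group S R). y \<otimes>\<^bsub>presented_group S R\<^esub> x = \<one>\<^bsub>presented_group S R\<^esub>"
    using u mult_class[of "inv_word u" S u R]
    by (intro bexI[of _ "pres_rel S R `` {inv_word u}"]) (auto simp: one_pg class_in_carrier)
qed




definition evalw :: "('g,'m) monoid_scheme \<Rightarrow> ('a \<Rightarrow> 'g) \<Rightarrow> 'a word \<Rightarrow> 'g" where
  "evalw G f w = foldr (\<lambda>(x,b) acc. (if b then inv\<^bsub>G\<^esub> (f x) else f x) \<otimes>\<^bsub>G\<^esub> acc) w \<one>\<^bsub>G\<^esub>"

lemma evalw_Nil[simp]: "evalw G f [] = \<one>\<^bsub>G\<^esub>" by (simp add: evalw_def)
lemma evalw_Cons[simp]: "evalw G f ((x,b)#w) = (if b then inv\<^bsub>G\<^esub> (f x) else f x) \<otimes>\<^bsub>G\<^esub> evalw G f w"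
  by (simp add: evalw_def)

context group begin

lemma evalw_closed: "f \<in> S \<rightarrow> carrier G \<Longrightarrow> w \<in> words S \<Longrightarrow> evalw G f w \<in> carrier G"
proof (induction w)
  case (Cons c w)
  obtain x b where c: "c = (x,b)" by fastforce
  then show ?case using Cons by auto
qed simp

lemma evalw_append: "f \<in> S \<rightarrow> carrier G \<Longrightarrow> u \<in> words S \<Longrightarrow> v \<in> words S \<Longrightarrow>
   evalw G f (u @ v) = evalw G f u \<otimes> evalw G f v"
proof (induction u)
  case (Cons c w)
  obtain x b where c: "c = (x,b)" by fastforce
  have "f x \<in> carrier G" "evalw G f w \<in> carrier G" "evalw G f v \<in> carrier G"
    using Cons c evalw_closed by auto
  then show ?case using Cons c by (simp add: m_assoc)
qed (simp add: evalw_closed)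

lemma evalw_lt: "f \<in> S \<rightarrow> carrier G \<Longrightarrow> x \<in> S \<Longrightarrow> evalw G f (lt x) = f x"
  by (auto simp: lt_def Pi_iff)

lemma evalw_inv_word: "f \<in> S \<rightarrow> carrier G \<Longrightarrow> w \<in> words S \<Longrightarrow>
   evalw G f (inv_word w) = inv (evalw G f w)"
proof (induction w)
  case Nil then show ?case by simp
next
  case (Cons c w)
  obtain x b where c: "c = (x,b)" by fastforce
  have fx: "f x \<in> carrier G" using Cons c by auto
  have ew: "evalw G f w \<in> carrier G" using Cons c evalw_closed by auto
  have iw: "inv_word w \<in> words S" "[(x, \<not> b)] \<in> words S" using Cons c by auto
  have "evalw G f (inv_word ((x,b) # w)) = evalw G f (inv_word w) \<otimes> evalw G f [(x, \<not> b)]"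
    using evalw_append[OF Cons(2) iw] by simp
  also have "\<dots> = inv (evalw G f w) \<otimes> inv (if b then inv (f x) else f x)"
    using Cons c fx by simp
  also have "\<dots> = inv ((if b then inv (f x) else f x) \<otimes> evalw G f w)"
    using fx ew by (simp add: inv_mult_group)
  finally show ?case using c by simp
qed

lemma evalw_respects:
  assumes f: "f \<in> S \<rightarrow> carrier G" and R: "\<And>r. r \<in> R \<Longrightarrow> r \<in> words S \<Longrightarrow> evalw G f r = \<one>"
  shows "(u,v) \<in> pres_rel S R \<Longrightarrow> evalw G f u = evalw G f v"
proof (induction rule: pres_rel.induct)
  case (cancel u v x b)
  have fx: "f x \<in> carrier G" using cancel f by auto
  have e: "evalw G f [(x, b), (x, \<not> b)] = \<one>" using fx by simp
  have w: "[(x, b), (x, \<not> b)] \<in> words S" "[(x, b), (x, \<not> b)] @ v \<in> words S" using cancel by auto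
  have "evalw G f (u @ [(x, b), (x, \<not> b)] @ v) = evalw G f u \<otimes> (\<one> \<otimes> evalw G f v)"
    using evalw_append[OF f cancel(1) w(2)] evalw_append[OF f w(1) cancel(2)] e by simp
  also have "\<dots> = evalw G f (u @ v)"
    using evalw_append[OF f cancel(1,2)] evalw_closed[OF f cancel(2)] by simp
  finally show ?case .
next
  case (relator u v r)
  have "evalw G f (u @ r @ v) = evalw G f u \<otimes> (evalw G f r \<otimes> evalw G f v)"
    using evalw_append[OF f relator(1)] evalw_append[OF f relator(4,2)] relator by simp
  also have "\<dots> = evalw G f (u @ v)"
    using evalw_append[OF f relator(1,2)] evalw_closed[OF f relator(2)] R relator by simp
  finally show ?case .
next
  case (trans u v w) then show ?case by simp
qed auto

end


lemma universal_property:
  fixes S :: "'a set" and R and H :: "('g,'m) monoid_scheme"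
  assumes H: "group H" and f: "f \<in> S \<rightarrow> carrier H"
    and R: "\<And>r. r \<in> R \<Longrightarrow> r \<in> words S \<Longrightarrow> evalw H f r = \<one>\<^bsub>H\<^esub>"
  shows "\<exists>\<phi> \<in> hom (presented_group S R) H. \<forall>x\<in>S. \<phi> (pgen S R x) = f x"
proof -
  interpret H: group H by (rule H)
  define \<phi> where "\<phi> A = evalw H f (SOME w. w \<in> A)" for A
  have phi_class: "\<phi> (pres_rel S R `` {w}) = evalw H f w" if w: "w \<in> words S" for w
  proof -
    have "w \<in> pres_rel S R `` {w}" using w pres_rel.refl by auto
    then have "(SOME w'. w' \<in> pres_rel S R `` {w}) \<in> pres_rel S R `` {w}" by (rule someI)
    then have "(w, SOME w'. w' \<in> pres_rel S R `` {w}) \<in> pres_rel S R" by simp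
    then have "evalw H f w = evalw H f (SOME w'. w' \<in> pres_rel S R `` {w})"
      using H.evalw_respects[of f S R, OF f R] by blast
    then show ?thesis unfolding \<phi>_def by simp
  qed
  have "\<phi> \<in> hom (presented_group S R) H"
  proof (rule homI)
    fix x assume "x \<in> carrier (presented_group S R)"
    then obtain u where "u \<in> words S" "x = pres_rel S R `` {u}"
      by (auto simp: carrier_pg elim!: quotientE)
    then show "\<phi> x \<in> carrier H" using phi_class H.evalw_closed[OF f] by simp
  next
    fix x y assume "x \<in> carrier (presented_group S R)" "y \<in> carrier (presented_group S R)"
    then obtain u v where "u \<in> words S" "v \<in> words S" "x = pres_rel S R `` {u}" "y = pres_rel S R `` {v}"
      by (auto simp: carrier_pg elim!: quotientE)
    then show "\<phi> (x \<otimes>\<^bsub>presented_group S R\<^esub> y) = \<phi> x \<otimes>\<^bsub>H\<^esub> \<phi> y"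
      by (simp add: mult_class phi_class H.evalw_append[OF f])
  qed
  moreover have "\<forall>x\<in>S. \<phi> (pgen S R x) = f x"
    using phi_class H.evalw_lt[OF f] by (simp add: pgen_def)
  ultimately show ?thesis by blast
qed


lemma pgen_carrier: "x \<in> S \<Longrightarrow> pgen S R x \<in> carrier (presented_group S R)"
  by (simp add: pgen_def class_in_carrier)

lemma evalw_pgen:
  assumes "w \<in> words S"
  shows "evalw (presented_group S R) (pgen S R) w = pres_rel S R `` {w}"
  using assms
proof (induction w)
  case Nil then show ?case by (simp add: one_pg)
next
  case (Cons c w)
  obtain x b where c: "c = (x,b)" by fastforce
  let ?P = "presented_group S R"
  interpret P: group ?P by (rule presented_group_is_group)
  have x: "x \<in> S" "w \<in> words S" using Cons c by auto
  have "pres_rel S R `` {[(x,True)]} \<otimes>\<^bsub>?P\<^esub> pgen S R x = \<one>\<^bsub>?P\<^esub>"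
  proof -
    have "([] @ [(x,True),(x,\<not>True)] @ [], [] @ []) \<in> pres_rel S R"
      using x by (intro pres_rel.cancel) auto
    then have "pres_rel S R `` {[(x,True),(x,False)]} = pres_rel S R `` {[]}"
      using pres_rel_equiv equiv_class_eq by fastforce
    then show ?thesis using x mult_class[of "[(x,True)]" S "[(x,False)]" R]
      by (simp add: pgen_def lt_def one_pg)
  qed
  then have inv: "inv\<^bsub>?P\<^esub> (pgen S R x) = pres_rel S R `` {[(x,True)]}"
    using x by (intro P.inv_equality) (auto intro: pgen_carrier class_in_carrier)
  have ev: "evalw ?P (pgen S R) w = pres_rel S R `` {w}" using Cons x by simp
  have m: "pres_rel S R `` {[(x,b)]} \<otimes>\<^bsub>?P\<^esub> pres_rel S R `` {w} = pres_rel S R `` {(x,b) # w}"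
    using mult_class[of "[(x,b)]" S w R] x by simp
  show ?case
  proof (cases b)
    case True then show ?thesis using c ev m inv by simp
  next
    case False then show ?thesis using c ev m by (simp add: pgen_def[of S R x] lt_def)
  qed
qed


lemma evalw_pgen_rel:
  assumes "r \<in> R" "r \<in> words S"
  shows "evalw (presented_group S R) (pgen S R) r = \<one>\<^bsub>presented_group S R\<^esub>"
proof -
  have "([] @ r @ [], [] @ []) \<in> pres_rel S R" using assms by (intro pres_rel.relator) auto
  then have "pres_rel S R `` {r} = pres_rel S R `` {[]}"
    using equiv_class_eq[OF pres_rel_equiv] by simp
  then show ?thesis using assms evalw_pgen[of r S R] by (simp add: one_pg)
qed

lemma pgen_Pi: "pgen S R \<in> S \<rightarrow> carrier (presented_group S R)"
  using pgen_carrier by (rule Pi_I)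


lemma (in group) normal_closure_normal:
  assumes "H \<subseteq> carrier G"
  shows "normal_closure G H \<lhd> G" "H \<subseteq> normal_closure G H"
proof -
  let ?C = "{g \<otimes> h \<otimes> inv g | g h. g \<in> carrier G \<and> h \<in> H}"
  have C: "?C \<subseteq> carrier G" using assms by auto
  show "normal_closure G H \<lhd> G" unfolding normal_closure_def
  proof (rule normal_generateI[OF C])
    fix h g assume "h \<in> ?C" "g \<in> carrier G"
    then obtain g' h' where h: "h = g' \<otimes> h' \<otimes> inv g'" "g' \<in> carrier G" "h' \<in> H" by blast
    have "g \<otimes> h \<otimes> inv g = (g \<otimes> g') \<otimes> h' \<otimes> inv (g \<otimes> g')"
    proof -
      have c: "g \<in> carrier G" "g' \<in> carrier G" "h' \<in> carrier G" using h assms \<open>g \<in> carrier G\<close> by auto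
      then have "inv (g \<otimes> g') = inv g' \<otimes> inv g" by (simp add: inv_mult_group)
      then show ?thesis using c h(1) by (simp add: m_assoc)
    qed
    then show "g \<otimes> h \<otimes> inv g \<in> ?C" using h \<open>g \<in> carrier G\<close> by blast
  qed
  show "H \<subseteq> normal_closure G H" unfolding normal_closure_def
  proof
    fix h assume "h \<in> H"
    then have "h = \<one> \<otimes> h \<otimes> inv \<one>" using assms by auto
    then have "h \<in> ?C" using \<open>h \<in> H\<close> by blast
    then show "h \<in> generate G ?C" by (rule generate.incl)
  qed
qed



lemma (in group) eq_of_inv: "x \<in> carrier G \<Longrightarrow> y \<in> carrier G \<Longrightarrow> x \<otimes> inv y = \<one> \<Longrightarrow> x = y"
  by (metis inv_closed inv_equality inv_inv)

lemma (in group) comm_of_commutator: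
  assumes "x \<in> carrier G" "y \<in> carrier G" "x \<otimes> y \<otimes> inv x \<otimes> inv y = \<one>"
  shows "x \<otimes> y = y \<otimes> x"
proof (rule eq_of_inv)
  have "inv (y \<otimes> x) = inv x \<otimes> inv y" using assms by (simp add: inv_mult_group)
  then show "x \<otimes> y \<otimes> inv (y \<otimes> x) = \<one>" using assms by (simp add: m_assoc)
qed (use assms in auto)

lemma G2_gen_mem: "i \<in> {1..N} \<Longrightarrow> j \<in> {1..N} \<Longrightarrow> i \<noteq> j \<Longrightarrow> {i,j} \<in> G2_gens N"
  unfolding G2_gens_def by blast

lemma G2_group: "group (G2 N)"
  by (simp add: G2_def presented_group_is_group)

lemma a2_carrier: "i \<in> {1..N} \<Longrightarrow> j \<in> {1..N} \<Longrightarrow> i \<noteq> j \<Longrightarrow> a2 N i j \<in> carrier (G2 N)"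
  unfolding a2_def G2_def by (intro pgen_carrier G2_gen_mem)

lemma G2_rel_uv:
  assumes "u @ inv_word v \<in> G2_rels N" "u \<in> words (G2_gens N)" "v \<in> words (G2_gens N)"
  shows "evalw (G2 N) (pgen (G2_gens N) (G2_rels N)) u = evalw (G2 N) (pgen (G2_gens N) (G2_rels N)) v"
proof -
  let ?P = "presented_group (G2_gens N) (G2_rels N)"
  interpret P: group ?P by (rule presented_group_is_group)
  have w: "u @ inv_word v \<in> words (G2_gens N)" using assms by simp
  have 1: "evalw ?P (pgen (G2_gens N) (G2_rels N)) (u @ inv_word v) = \<one>\<^bsub>?P\<^esub>"
    using evalw_pgen_rel[OF assms(1) w] .
  have "evalw ?P (pgen (G2_gens N) (G2_rels N)) (u @ inv_word v) =
        evalw ?P (pgen (G2_gens N) (G2_rels N)) u \<otimes>\<^bsub>?P\<^esub> inv\<^bsub>?P\<^esub> evalw ?P (pgen (G2_gens N) (G2_rels N)) v"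
    using P.evalw_append[OF pgen_Pi] P.evalw_inv_word[OF pgen_Pi] assms by simp
  then show ?thesis unfolding G2_def
    using 1 P.eq_of_inv P.evalw_closed[OF pgen_Pi] assms(2,3) by metis
qed

lemma G2_inv:
  assumes "i \<in> {1..N}" "j \<in> {1..N}" "i \<noteq> j"
  shows "a2 N i j \<otimes>\<^bsub>G2 N\<^esub> a2 N i j = \<one>\<^bsub>G2 N\<^esub>"
proof -
  let ?P = "presented_group (G2_gens N) (G2_rels N)"
  interpret P: group ?P by (rule presented_group_is_group)
  have r: "lt {i,j} @ lt {i,j} \<in> G2_rels N" unfolding G2_rels_def using assms by blast
  have w: "lt {i,j} @ lt {i,j} \<in> words (G2_gens N)" using assms G2_gen_mem by simp
  have c: "pgen (G2_gens N) (G2_rels N) {i,j} \<in> carrier ?P" using assms by (intro pgen_carrier G2_gen_mem)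
  show ?thesis using evalw_pgen_rel[OF r w] c unfolding G2_def a2_def by (simp add: lt_def)
qed

lemma G2_far:
  assumes "i \<in> {1..N}" "j \<in> {1..N}" "k \<in> {1..N}" "l \<in> {1..N}" "distinct [i,j,k,l]"
  shows "a2 N i j \<otimes>\<^bsub>G2 N\<^esub> a2 N k l = a2 N k l \<otimes>\<^bsub>G2 N\<^esub> a2 N i j"
proof -
  let ?P = "presented_group (G2_gens N) (G2_rels N)"
  interpret P: group ?P by (rule presented_group_is_group)
  have r: "(lt {i,j} @ lt {k,l}) @ inv_word (lt {k,l} @ lt {i,j}) \<in> G2_rels N"
    unfolding G2_rels_def append_assoc using assms by blast
  have g: "{i,j} \<in> G2_gens N" "{k,l} \<in> G2_gens N" using assms G2_gen_mem by auto
  have c: "pgen (G2_gens N) (G2_rels N) {i,j} \<in> carrier ?P" "pgen (G2_gens N) (G2_rels N) {k,l} \<in> carrier ?P"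
    using g by (auto intro: pgen_carrier)
  show ?thesis using G2_rel_uv[OF r] g c unfolding G2_def a2_def by (simp add: lt_def)
qed

lemma G2_tetra:
  assumes "i \<in> {1..N}" "j \<in> {1..N}" "k \<in> {1..N}" "distinct [i,j,k]"
  shows "a2 N i j \<otimes>\<^bsub>G2 N\<^esub> (a2 N i k \<otimes>\<^bsub>G2 N\<^esub> a2 N j k) =
         a2 N j k \<otimes>\<^bsub>G2 N\<^esub> (a2 N i k \<otimes>\<^bsub>G2 N\<^esub> a2 N i j)"
proof -
  let ?P = "presented_group (G2_gens N) (G2_rels N)"
  interpret P: group ?P by (rule presented_group_is_group)
  have r: "(lt {i,j} @ lt {i,k} @ lt {j,k}) @ inv_word (lt {j,k} @ lt {i,k} @ lt {i,j}) \<in> G2_rels N"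
    unfolding G2_rels_def append_assoc using assms by blast
  have g: "{i,j} \<in> G2_gens N" "{i,k} \<in> G2_gens N" "{j,k} \<in> G2_gens N" using assms G2_gen_mem by auto
  have c: "pgen (G2_gens N) (G2_rels N) {i,j} \<in> carrier ?P" "pgen (G2_gens N) (G2_rels N) {i,k} \<in> carrier ?P"
    "pgen (G2_gens N) (G2_rels N) {j,k} \<in> carrier ?P"
    using g by (auto intro: pgen_carrier)
  show ?thesis using G2_rel_uv[OF r] g c unfolding G2_def a2_def by (simp add: lt_def)
qed



lemma (in group) rel6:
  assumes c: "a \<in> carrier G" "b \<in> carrier G" "c \<in> carrier G"
    and "a \<otimes> a = \<one>" "b \<otimes> b = \<one>" "a \<otimes> b = b \<otimes> a" "c \<otimes> (b \<otimes> a) = a \<otimes> (b \<otimes> c)"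
  shows "a \<otimes> (b \<otimes> (c \<otimes> (b \<otimes> a))) = c"
proof -
  have "a \<otimes> (b \<otimes> (c \<otimes> (b \<otimes> a))) = (a \<otimes> (b \<otimes> c)) \<otimes> (a \<otimes> b)"
    using c assms(6) by (simp add: m_assoc)
  also have "\<dots> = (c \<otimes> (b \<otimes> a)) \<otimes> (a \<otimes> b)" by (simp only: assms(7))
  also have "\<dots> = c \<otimes> (b \<otimes> ((a \<otimes> a) \<otimes> b))" using c by (simp add: m_assoc)
  also have "\<dots> = c" using c assms(4,5) by (simp add: m_assoc[symmetric])
  finally show ?thesis .
qed

theorem mainTheorem7:
  fixes n :: nat
  assumes "n > 2"
  shows "\<exists>\<kappa> \<in> hom (GD n) (Q n).
           (\<forall>i \<in> {1..n}. \<forall>j \<in> {1..n}. i \<noteq> j \<longrightarrow>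
              \<kappa> (aD n i j) = NQ n #>\<^bsub>G2 (Suc n)\<^esub> a2 (Suc n) i j)
         \<and> (\<forall>i \<in> {1..n}. \<kappa> (tauD n i) = NQ n #>\<^bsub>G2 (Suc n)\<^esub> a2 (Suc n) i (Suc n))"
proof -
  define m where "m = Suc n"
  define CS where "CS = {a2 m i m \<otimes>\<^bsub>G2 m\<^esub> a2 m j m
        \<otimes>\<^bsub>G2 m\<^esub> inv\<^bsub>G2 m\<^esub> (a2 m i m)
        \<otimes>\<^bsub>G2 m\<^esub> inv\<^bsub>G2 m\<^esub> (a2 m j m) | i j. i \<in> {1..n} \<and> j \<in> {1..n}}"
  have NQ: "NQ n = normal_closure (G2 m) CS" by (simp add: NQ_def CS_def m_def)
  interpret G: group "G2 m" by (rule G2_group)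
  have im: "i \<in> {1..n} \<Longrightarrow> a2 m i m \<in> carrier (G2 m)" for i
    by (rule a2_carrier) (auto simp: m_def)
  have CSc: "CS \<subseteq> carrier (G2 m)" unfolding CS_def using im by auto
  have nrm: "NQ n \<lhd> G2 m" and CSN: "CS \<subseteq> NQ n"
    using G.normal_closure_normal[OF CSc] NQ by auto
  interpret N: normal "NQ n" "G2 m" by (rule nrm)
  interpret Q: group "Q n" unfolding Q_def m_def[symmetric] by (rule N.factorgroup_is_group)
  have proj: "(\<lambda>x. NQ n #>\<^bsub>G2 m\<^esub> x) \<in> hom (G2 m) (Q n)"
    unfolding Q_def m_def[symmetric] by (rule N.r_coset_hom_Mod)
  interpret h: group_hom "G2 m" "Q n" "\<lambda>x. NQ n #>\<^bsub>G2 m\<^esub> x"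
    by (unfold_locales) (rule proj)
  have oneQ: "\<one>\<^bsub>Q n\<^esub> = NQ n" unfolding Q_def by simp
  have Rm: "i \<in> {1..n} \<Longrightarrow> i \<in> {1..m}" for i by (auto simp: m_def)
  have mR: "m \<in> {1..m}" "i \<in> {1..n} \<Longrightarrow> i \<noteq> m" for i by (auto simp: m_def)
  
  have QC: "NQ n #>\<^bsub>G2 m\<^esub> a2 m i j \<in> carrier (Q n)" if "i \<in> {1..m}" "j \<in> {1..m}" "i \<noteq> j" for i j
    using a2_carrier[OF that] by simp
  have QI: "(NQ n #>\<^bsub>G2 m\<^esub> a2 m i j) \<otimes>\<^bsub>Q n\<^esub> (NQ n #>\<^bsub>G2 m\<^esub> a2 m i j) = \<one>\<^bsub>Q n\<^esub>"
    if "i \<in> {1..m}" "j \<in> {1..m}" "i \<noteq> j" for i j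
    using h.hom_mult[OF a2_carrier[OF that] a2_carrier[OF that]] G2_inv[OF that] by simp
  have QF: "(NQ n #>\<^bsub>G2 m\<^esub> a2 m i j) \<otimes>\<^bsub>Q n\<^esub> (NQ n #>\<^bsub>G2 m\<^esub> a2 m k l) =
            (NQ n #>\<^bsub>G2 m\<^esub> a2 m k l) \<otimes>\<^bsub>Q n\<^esub> (NQ n #>\<^bsub>G2 m\<^esub> a2 m i j)"
    if "i \<in> {1..m}" "j \<in> {1..m}" "k \<in> {1..m}" "l \<in> {1..m}" "distinct [i,j,k,l]" for i j k l
  proof -
    have c: "a2 m i j \<in> carrier (G2 m)" "a2 m k l \<in> carrier (G2 m)" using that by (auto intro: a2_carrier)
    show ?thesis using h.hom_mult[OF c] h.hom_mult[OF c(2,1)] G2_far[OF that] by simp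
  qed
  have QT: "(NQ n #>\<^bsub>G2 m\<^esub> a2 m i j) \<otimes>\<^bsub>Q n\<^esub> ((NQ n #>\<^bsub>G2 m\<^esub> a2 m i k) \<otimes>\<^bsub>Q n\<^esub> (NQ n #>\<^bsub>G2 m\<^esub> a2 m j k)) =
            (NQ n #>\<^bsub>G2 m\<^esub> a2 m j k) \<otimes>\<^bsub>Q n\<^esub> ((NQ n #>\<^bsub>G2 m\<^esub> a2 m i k) \<otimes>\<^bsub>Q n\<^esub> (NQ n #>\<^bsub>G2 m\<^esub> a2 m i j))"
    if "i \<in> {1..m}" "j \<in> {1..m}" "k \<in> {1..m}" "distinct [i,j,k]" for i j k
  proof -
    have c: "a2 m i j \<in> carrier (G2 m)" "a2 m i k \<in> carrier (G2 m)" "a2 m j k \<in> carrier (G2 m)"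
      using that by (auto intro: a2_carrier)
    have "NQ n #>\<^bsub>G2 m\<^esub> (a2 m i j \<otimes>\<^bsub>G2 m\<^esub> (a2 m i k \<otimes>\<^bsub>G2 m\<^esub> a2 m j k)) =
          NQ n #>\<^bsub>G2 m\<^esub> (a2 m j k \<otimes>\<^bsub>G2 m\<^esub> (a2 m i k \<otimes>\<^bsub>G2 m\<^esub> a2 m i j))"
      using G2_tetra[OF that] by simp
    then show ?thesis using c by simp
  qed
  have QN: "(NQ n #>\<^bsub>G2 m\<^esub> a2 m i m) \<otimes>\<^bsub>Q n\<^esub> (NQ n #>\<^bsub>G2 m\<^esub> a2 m j m) =
            (NQ n #>\<^bsub>G2 m\<^esub> a2 m j m) \<otimes>\<^bsub>Q n\<^esub> (NQ n #>\<^bsub>G2 m\<^esub> a2 m i m)"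
    if "i \<in> {1..n}" "j \<in> {1..n}" for i j
  proof (rule Q.comm_of_commutator)
    have c: "a2 m i m \<in> carrier (G2 m)" "a2 m j m \<in> carrier (G2 m)" using im that by auto
    let ?x = "a2 m i m \<otimes>\<^bsub>G2 m\<^esub> a2 m j m \<otimes>\<^bsub>G2 m\<^esub> inv\<^bsub>G2 m\<^esub> (a2 m i m) \<otimes>\<^bsub>G2 m\<^esub> inv\<^bsub>G2 m\<^esub> (a2 m j m)"
    have "?x \<in> NQ n" using CSN that unfolding CS_def by blast
    then have "NQ n #>\<^bsub>G2 m\<^esub> ?x = \<one>\<^bsub>Q n\<^esub>"
      using G.coset_join2[OF _ N.subgroup_axioms] c oneQ by simp
    then show "(NQ n #>\<^bsub>G2 m\<^esub> a2 m i m) \<otimes>\<^bsub>Q n\<^esub> (NQ n #>\<^bsub>G2 m\<^esub> a2 m j m) \<otimes>\<^bsub>Q n\<^esub>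
      inv\<^bsub>Q n\<^esub> (NQ n #>\<^bsub>G2 m\<^esub> a2 m i m) \<otimes>\<^bsub>Q n\<^esub> inv\<^bsub>Q n\<^esub> (NQ n #>\<^bsub>G2 m\<^esub> a2 m j m) = \<one>\<^bsub>Q n\<^esub>"
      using c by simp
  qed (use im that in auto)
  define e where "e i j = NQ n #>\<^bsub>G2 m\<^esub> a2 m i j" for i j
  note QC' = QC[folded e_def] and QI' = QI[folded e_def] and QF' = QF[folded e_def]
    and QT' = QT[folded e_def] and QN' = QN[folded e_def]
  define f where "f g = (case g of A s \<Rightarrow> NQ n #>\<^bsub>G2 m\<^esub> pgen (G2_gens m) (G2_rels m) s
                          | Tau i \<Rightarrow> NQ n #>\<^bsub>G2 m\<^esub> a2 m i m)" for g
  have fA: "f (A {i,j}) = e i j" for i j by (simp add: f_def e_def a2_def)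
  have fT: "f (Tau i) = e i m" for i by (simp add: f_def e_def)
  have gA: "A {i,j} \<in> GD_gens n" if "i \<in> {1..n}" "j \<in> {1..n}" "i \<noteq> j" for i j
    unfolding GD_gens_def using that by blast
  have gT: "Tau i \<in> GD_gens n" if "i \<in> {1..n}" for i
    unfolding GD_gens_def using that by blast
  have eA: "e i j \<in> carrier (Q n)" if "i \<in> {1..n}" "j \<in> {1..n}" "i \<noteq> j" for i j
    using QC' that Rm by auto
  have eT: "e i m \<in> carrier (Q n)" if "i \<in> {1..n}" for i
    using QC' that Rm mR by auto
  have fPi: "f \<in> GD_gens n \<rightarrow> carrier (Q n)"
  proof
    fix g assume "g \<in> GD_gens n"
    then show "f g \<in> carrier (Q n)" unfolding GD_gens_def using fA fT eA eT by auto
  qed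
  have key: "evalw (Q n) f (u @ inv_word v) = \<one>\<^bsub>Q n\<^esub>"
    if "u \<in> words (GD_gens n)" "v \<in> words (GD_gens n)" "evalw (Q n) f u = evalw (Q n) f v" for u v
    using Q.evalw_append[OF fPi] Q.evalw_inv_word[OF fPi] Q.evalw_closed[OF fPi] that by simp
  have rels: "evalw (Q n) f r = \<one>\<^bsub>Q n\<^esub>" if r: "r \<in> GD_rels n" "r \<in> words (GD_gens n)" for r
  proof -
    have c1: "evalw (Q n) f (lt (A {i,j}) @ lt (A {i,j})) = \<one>\<^bsub>Q n\<^esub>"
      if "i \<in> {1..n}" "j \<in> {1..n}" "i \<noteq> j" for i j
      using that QI'[of i j] eA[OF that] Rm by (simp add: lt_def fA)
    have c2: "evalw (Q n) f (lt (A {i,j}) @ lt (A {k,l}) @ inv_word (lt (A {k,l}) @ lt (A {i,j}))) = \<one>\<^bsub>Q n\<^esub>"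
      if "i \<in> {1..n}" "j \<in> {1..n}" "k \<in> {1..n}" "l \<in> {1..n}" "distinct [i,j,k,l]" for i j k l
    proof -
      have "evalw (Q n) f (lt (A {i,j}) @ lt (A {k,l})) = evalw (Q n) f (lt (A {k,l}) @ lt (A {i,j}))"
        using that QF'[of i j k l] eA[of i j] eA[of k l] Rm by (simp add: lt_def fA)
      then show ?thesis using key[of "lt (A {i,j}) @ lt (A {k,l})" "lt (A {k,l}) @ lt (A {i,j})"] that gA
        by (simp only: append_assoc) simp
    qed
    have c3: "evalw (Q n) f (lt (A {i,j}) @ lt (A {i,k}) @ lt (A {j,k}) @
        inv_word (lt (A {j,k}) @ lt (A {i,k}) @ lt (A {i,j}))) = \<one>\<^bsub>Q n\<^esub>"
      if "i \<in> {1..n}" "j \<in> {1..n}" "k \<in> {1..n}" "distinct [i,j,k]" for i j k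
    proof -
      have "evalw (Q n) f (lt (A {i,j}) @ lt (A {i,k}) @ lt (A {j,k})) = evalw (Q n) f (lt (A {j,k}) @ lt (A {i,k}) @ lt (A {i,j}))"
        using that QT'[of i j k] eA[of i j] eA[of i k] eA[of j k] Rm by (simp add: lt_def fA)
      then show ?thesis using key[of "lt (A {i,j}) @ lt (A {i,k}) @ lt (A {j,k})" "lt (A {j,k}) @ lt (A {i,k}) @ lt (A {i,j})"] that gA
        by (simp only: append_assoc) simp
    qed
    have c4: "evalw (Q n) f (lt (Tau i) @ lt (Tau i)) = \<one>\<^bsub>Q n\<^esub>" if "i \<in> {1..n}" for i
      using that QI'[of i m] eT[OF that] Rm mR by (simp add: lt_def fT)
    have c5: "evalw (Q n) f (lt (Tau i) @ lt (Tau j) @ inv_word (lt (Tau j) @ lt (Tau i))) = \<one>\<^bsub>Q n\<^esub>"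
      if "i \<in> {1..n}" "j \<in> {1..n}" for i j
    proof -
      have "evalw (Q n) f (lt (Tau i) @ lt (Tau j)) = evalw (Q n) f (lt (Tau j) @ lt (Tau i))"
        using that QN'[of i j] eT[of i] eT[of j] by (simp add: lt_def fT)
      then show ?thesis using key[of "lt (Tau i) @ lt (Tau j)" "lt (Tau j) @ lt (Tau i)"] that gT
        by (simp only: append_assoc) simp
    qed
    have c6: "evalw (Q n) f (lt (Tau i) @ lt (Tau j) @ lt (A {i,j}) @ lt (Tau j) @ lt (Tau i) @ inv_word (lt (A {i,j}))) = \<one>\<^bsub>Q n\<^esub>"
      if "i \<in> {1..n}" "j \<in> {1..n}" "i \<noteq> j" for i j
    proof -
      have ca: "e i m \<in> carrier (Q n)" "e j m \<in> carrier (Q n)" "e i j \<in> carrier (Q n)"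
        using that eT eA by auto
      have t: "e j i \<otimes>\<^bsub>Q n\<^esub> (e j m \<otimes>\<^bsub>Q n\<^esub> e i m) = e i m \<otimes>\<^bsub>Q n\<^esub> (e j m \<otimes>\<^bsub>Q n\<^esub> e j i)"
        using QT'[of j i m] that Rm mR by auto
      have eji: "e j i = e i j" by (simp add: e_def a2_def insert_commute)
      have "e i m \<otimes>\<^bsub>Q n\<^esub> (e j m \<otimes>\<^bsub>Q n\<^esub> (e i j \<otimes>\<^bsub>Q n\<^esub> (e j m \<otimes>\<^bsub>Q n\<^esub> e i m))) = e i j"
        by (rule Q.rel6[OF ca]) (use QI'[of i m] QI'[of j m] QN'[of i j] t eji that Rm mR in auto)
      then have "evalw (Q n) f (lt (Tau i) @ lt (Tau j) @ lt (A {i,j}) @ lt (Tau j) @ lt (Tau i)) = evalw (Q n) f (lt (A {i,j}))"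
        using ca by (simp add: lt_def fA fT)
      then show ?thesis using key[of "lt (Tau i) @ lt (Tau j) @ lt (A {i,j}) @ lt (Tau j) @ lt (Tau i)" "lt (A {i,j})"] that gA gT
        by (simp only: append_assoc) simp
    qed
    have c7: "evalw (Q n) f (lt (A {i,j}) @ lt (Tau k) @ inv_word (lt (Tau k) @ lt (A {i,j}))) = \<one>\<^bsub>Q n\<^esub>"
      if "i \<in> {1..n}" "j \<in> {1..n}" "k \<in> {1..n}" "distinct [i,j,k]" for i j k
    proof -
      have d: "distinct [i,j,k,m]" using that mR by auto
      have "evalw (Q n) f (lt (A {i,j}) @ lt (Tau k)) = evalw (Q n) f (lt (Tau k) @ lt (A {i,j}))"
        using that QF'[of i j k m] d eA[of i j] eT[of k] Rm mR by (simp add: lt_def fA fT)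
      then show ?thesis using key[of "lt (A {i,j}) @ lt (Tau k)" "lt (Tau k) @ lt (A {i,j})"] that gA gT
        by (simp only: append_assoc) simp
    qed
    show ?thesis using r(1) unfolding GD_rels_def
      by (elim UnE CollectE exE conjE; simp only: c1 c2 c3 c4 c5 c6 c7 not_False_eq_True simp_thms)
  qed
  obtain \<phi> where phi: "\<phi> \<in> hom (GD n) (Q n)"
      "\<forall>x\<in>GD_gens n. \<phi> (pgen (GD_gens n) (GD_rels n) x) = f x"
    using universal_property[OF Q.is_group fPi rels] unfolding GD_def by blast
  show ?thesis
  proof (intro bexI[OF _ phi(1)] conjI ballI impI)
    fix i j assume "i \<in> {1..n}" "j \<in> {1..n}" "i \<noteq> j"
    then show "\<phi> (aD n i j) = NQ n #>\<^bsub>G2 (Suc n)\<^esub> a2 (Suc n) i j"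
      using phi(2) gA fA unfolding aD_def e_def m_def by auto
  next
    fix i assume "i \<in> {1..n}"
    then show "\<phi> (tauD n i) = NQ n #>\<^bsub>G2 (Suc n)\<^esub> a2 (Suc n) i (Suc n)"
      using phi(2) gT fT unfolding tauD_def e_def m_def by auto
  qed
qed

end
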